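(* Let $n$ be a positive integer and $m=n+1$. Then for every zero-normalized $\Gamma_{m,n}$-semimodule $\Delta$, $G_n(\widehat{\Delta})=\big(G_n(\Delta)\big)^T$, where $T$ denotes transposition (conjugation) of Young diagrams.
   Context: Let $m,n$ be coprime positive integers and $\Gamma=\{am+bn:a,b\in\mathbb{Z}_{\ge0}\}$. A $\Gamma$-semimodule is $\Delta\subset\mathbb{Z}_{\ge0}$ with $\Delta+\Gamma\subset\Delta$; zero-normalized means $\min\Delta=0$. An $n$-generator of $\Delta$ is $a\in\Delta$ with $a-n\notin\Delta$; there are exactly $n$ of them, $b_1<\dots<b_n$. Put $g_n(x)=\#(([x,x+m)\cap\mathbb{Z})\setminus\Delta)$; then $g_n(b_1)\ge\dots\ge g_n(b_n)$ and $G_n(\Delta)$ is the Young diagram with these column heights. The dual semimodule is $\Delta^*=\{\varphi\in\mathbb{Z}:\varphi+\Delta\subset\Gamma\}$, and $\widehat\Delta=\Delta^*-\min\Delta^*$ (equivalently $\widehat\Delta=\max(\mathbb{Z}\setminus\Delta)-(\mathbb{Z}\setminus\Delta)$). *)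

theory Defs
  imports Main
begin

definition Gamma :: "nat \<Rightarrow> nat \<Rightarrow> int set" where
  "Gamma m n = {int (a * m + b * n) | a b. True}"

definition semimodule :: "nat \<Rightarrow> nat \<Rightarrow> int set \<Rightarrow> bool" where
  "semimodule m n D \<longleftrightarrow> D \<subseteq> {0..} \<and> (\<forall>d\<in>D. \<forall>g\<in>Gamma m n. d + g \<in> D)"

definition zero_normalized :: "int set \<Rightarrow> bool" where
  "zero_normalized D \<longleftrightarrow> 0 \<in> D \<and> (\<forall>d\<in>D. 0 \<le> d)"

definition ngens :: "nat \<Rightarrow> int set \<Rightarrow> int set" where
  "ngens n D = {a \<in> D. a - int n \<notin> D}"

definition gfun :: "nat \<Rightarrow> int set \<Rightarrow> int \<Rightarrow> nat" where
  "gfun m D x = card ({x..<x + int m} - D)"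

definition Gn :: "nat \<Rightarrow> nat \<Rightarrow> int set \<Rightarrow> nat list" where
  "Gn m n D = map (gfun m D) (sorted_list_of_set (ngens n D))"

definition young_cells :: "nat list \<Rightarrow> (nat \<times> nat) set" where
  "young_cells cs = {(i, j). i < length cs \<and> j < cs ! i}"

definition transpose_cells :: "(nat \<times> nat) set \<Rightarrow> (nat \<times> nat) set" where
  "transpose_cells C = {(j, i). (i, j) \<in> C}"

definition dual :: "nat \<Rightarrow> nat \<Rightarrow> int set \<Rightarrow> int set" where
  "dual m n D = {phi. \<forall>d\<in>D. phi + d \<in> Gamma m n}"

definition hat :: "nat \<Rightarrow> nat \<Rightarrow> int set \<Rightarrow> int set" where
  "hat m n D = (\<lambda>x. x - (LEAST phi. phi \<in> dual m n D)) ` dual m n D"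

end

theory Submission
  imports Defs
begin


lemma count_ge:
  fixes s :: "int list"
  assumes s: "sorted_wrt (<) s"
  shows "(k < card {b\<in>set s. t \<le> b}) \<longleftrightarrow> (k < length s \<and> t \<le> s!(length s-1-k))"
proof -
  let ?N = "length s"
  have d: "distinct s" using s by (simp add: strict_sorted_iff)
  have eq: "{b\<in>set s. t \<le> b} = (nth s) ` {p. p < ?N \<and> t \<le> s!p}"
    by (auto simp: in_set_conv_nth)
  have inj: "inj_on (nth s) {p. p < ?N \<and> t \<le> s!p}" using d by (intro inj_on_nth) auto
  have c: "card {b\<in>set s. t \<le> b} = card {p. p < ?N \<and> t \<le> s!p}"
    unfolding eq using inj by (rule card_image)
  have mono: "\<And>p q. p \<le> q \<Longrightarrow> q < ?N \<Longrightarrow> s!p \<le> s!q"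
    using s by (metis le_less order.strict_implies_order sorted_wrt_nth_less)
  show ?thesis
  proof
    assume k: "k < card {b\<in>set s. t \<le> b}"
    have "card {p. p < ?N \<and> t \<le> s!p} \<le> ?N"
      by (metis (no_types, lifting) card_lessThan card_mono finite_lessThan lessThan_iff mem_Collect_eq subsetI)
    hence kN: "k < ?N" using k c by simp
    moreover have "t \<le> s!(?N-1-k)"
    proof (rule ccontr)
      assume "\<not> t \<le> s!(?N-1-k)"
      note nt = this
      have "{p. p < ?N \<and> t \<le> s!p} \<subseteq> {?N-k..<?N}"
      proof (rule subsetI)
        fix p assume p: "p \<in> {p. p < ?N \<and> t \<le> s!p}"
        have "\<not> p \<le> ?N-1-k"
        proof
          assume "p \<le> ?N-1-k"
          hence "s!p \<le> s!(?N-1-k)" using mono kN by simp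
          thus False using p nt by simp
        qed
        thus "p \<in> {?N-k..<?N}" using p by auto
      qed
      hence "{p. p < ?N \<and> t \<le> s!p} \<subseteq> {?N-k..<?N}" .
      hence "card {p. p < ?N \<and> t \<le> s!p} \<le> k"
        by (metis card_atLeastLessThan card_mono diff_diff_cancel finite_atLeastLessThan kN less_imp_le_nat)
      thus False using k c by simp
    qed
    ultimately show "k < ?N \<and> t \<le> s!(?N-1-k)" by simp
  next
    assume h: "k < ?N \<and> t \<le> s!(?N-1-k)"
    have "{?N-1-k..<?N} \<subseteq> {p. p < ?N \<and> t \<le> s!p}"
      using h mono by (auto intro: order.trans)
    hence "card {?N-1-k..<?N} \<le> card {p. p < ?N \<and> t \<le> s!p}"
      by (intro card_mono) auto
    thus "k < card {b\<in>set s. t \<le> b}" using h c by simp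
  qed
qed

lemma count_le:
  fixes s :: "int list"
  assumes s: "sorted_wrt (<) s"
  shows "(k < card {b\<in>set s. b \<le> t}) \<longleftrightarrow> (k < length s \<and> s!k \<le> t)"
proof -
  let ?N = "length s"
  have d: "distinct s" using s by (simp add: strict_sorted_iff)
  have eq: "{b\<in>set s. b \<le> t} = (nth s) ` {p. p < ?N \<and> s!p \<le> t}"
    by (auto simp: in_set_conv_nth)
  have inj: "inj_on (nth s) {p. p < ?N \<and> s!p \<le> t}" using d by (intro inj_on_nth) auto
  have c: "card {b\<in>set s. b \<le> t} = card {p. p < ?N \<and> s!p \<le> t}"
    unfolding eq using inj by (rule card_image)
  have mono: "\<And>p q. p \<le> q \<Longrightarrow> q < ?N \<Longrightarrow> s!p \<le> s!q"
    using s by (metis le_less order.strict_implies_order sorted_wrt_nth_less)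
  show ?thesis
  proof
    assume k: "k < card {b\<in>set s. b \<le> t}"
    have "card {p. p < ?N \<and> s!p \<le> t} \<le> ?N"
      by (metis (no_types, lifting) card_lessThan card_mono finite_lessThan lessThan_iff mem_Collect_eq subsetI)
    hence kN: "k < ?N" using k c by simp
    moreover have "s!k \<le> t"
    proof (rule ccontr)
      assume "\<not> s!k \<le> t"
      note nt = this
      have "{p. p < ?N \<and> s!p \<le> t} \<subseteq> {..<k}"
      proof (rule subsetI)
        fix p assume p: "p \<in> {p. p < ?N \<and> s!p \<le> t}"
        have "\<not> k \<le> p"
        proof
          assume "k \<le> p"
          hence "s!k \<le> s!p" using mono p by simp
          thus False using p nt by simp
        qed
        thus "p \<in> {..<k}" by simp
      qed
      hence "{p. p < ?N \<and> s!p \<le> t} \<subseteq> {..<k}" .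
      hence "card {p. p < ?N \<and> s!p \<le> t} \<le> k"
        by (metis card_lessThan card_mono finite_lessThan)
      thus False using k c by simp
    qed
    ultimately show "k < ?N \<and> s!k \<le> t" by simp
  next
    assume h: "k < ?N \<and> s!k \<le> t"
    have "{..k} \<subseteq> {p. p < ?N \<and> s!p \<le> t}"
      using h mono by (auto intro: order.trans)
    hence "card {..k} \<le> card {p. p < ?N \<and> s!p \<le> t}"
      by (intro card_mono) auto
    thus "k < card {b\<in>set s. b \<le> t}" using h c by simp
  qed
qed



lemma gamma_int: "x \<in> Gamma m n \<longleftrightarrow> (\<exists>a b::int. a \<ge> 0 \<and> b \<ge> 0 \<and> x = a * int m + b * int n)"
proof
  assume "x \<in> Gamma m n"
  then obtain a b where "x = int (a*m + b*n)" by (auto simp: Gamma_def)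
  thus "\<exists>a b::int. a \<ge> 0 \<and> b \<ge> 0 \<and> x = a * int m + b * int n"
    by (intro exI[of _ "int a"] exI[of _ "int b"]) auto
next
  assume "\<exists>a b::int. a \<ge> 0 \<and> b \<ge> 0 \<and> x = a * int m + b * int n"
  then obtain a b :: int where h: "a \<ge> 0" "b \<ge> 0" "x = a * int m + b * int n" by blast
  have "x = int (nat a * m + nat b * n)" using h by simp
  thus "x \<in> Gamma m n" unfolding Gamma_def by blast
qed

lemma gamma_add: "x \<in> Gamma m n \<Longrightarrow> y \<in> Gamma m n \<Longrightarrow> x + y \<in> Gamma m n"
  unfolding gamma_int
  apply (elim exE conjE)
  subgoal for a b c d by (rule exI[of _ "a+b"], rule exI[of _ "c+d"]) (auto simp: algebra_simps)
  done

lemma gamma_nonneg: "x \<in> Gamma m n \<Longrightarrow> 0 \<le> x"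
  by (auto simp: Gamma_def)

lemma gamma_sym:
  assumes "n > 0" "m = n + 1" "x \<notin> Gamma m n"
  shows "int n * int n - int n - 1 - x \<in> Gamma m n"
proof -
  define q where "q = x div int n"
  define r where "r = x mod int n"
  have x: "x = q * int n + r" unfolding q_def r_def by simp
  have r0: "0 \<le> r" "r < int n" using assms(1) unfolding r_def by auto
  have "\<not> r \<le> q"
  proof
    assume "r \<le> q"
    hence "x \<in> Gamma m n" unfolding gamma_int using r0 x assms(2)
      by (intro exI[of _ r] exI[of _ "q - r"]) (auto simp: algebra_simps)
    thus False using assms(3) by simp
  qed
  thus ?thesis unfolding gamma_int using r0 x assms(2)
    by (intro exI[of _ "int n - 1 - r"] exI[of _ "r - q - 1"]) (auto simp: algebra_simps)
qed

lemma gamma_F: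
  assumes "n > 0" "m = n + 1"
  shows "int n * int n - int n - 1 \<notin> Gamma m n"
proof
  assume "int n * int n - int n - 1 \<in> Gamma m n"
  then obtain a b :: int where h: "a \<ge> 0" "b \<ge> 0" "int n * int n - int n - 1 = a * int m + b * int n"
    unfolding gamma_int by blast
  have "a + 1 = int n * (int n - 1 - a - b)" using h assms(2) by (simp add: algebra_simps)
  hence "int n dvd a + 1" by simp
  hence "int n \<le> a + 1" using h(1) by (intro zdvd_imp_le) auto
  hence "(int n - 1) * (int n + 1) \<le> a * (int n + 1)" by (intro mult_right_mono) auto
  moreover have "0 \<le> b * int n" using h by simp
  moreover have "(int n - 1) * (int n + 1) = int n * int n - 1" by (simp add: algebra_simps)
  moreover have "a * (int n + 1) = a * int m" using assms(2) by simp
  ultimately show False using h assms(1) by linarith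
qed



definition gs :: "nat \<Rightarrow> int set \<Rightarrow> bool" where
  "gs n B \<longleftrightarrow> (\<forall>x. \<exists>!b. b \<in> B \<and> b mod int n = x mod int n)"
definition gen :: "nat \<Rightarrow> int set \<Rightarrow> int set" where
  "gen n B = {x. \<exists>b\<in>B. b mod int n = x mod int n \<and> b \<le> x}"

lemma modstep:
  fixes b x :: int
  assumes "n > 0" "b mod n = x mod n" "b < x"
  shows "b + n \<le> x"
proof -
  have "x mod n = b mod n" using assms(2) by simp
  hence "n dvd x - b" by (simp only: mod_eq_dvd_iff)
  hence "n \<le> x - b" using assms(3) by (intro zdvd_imp_le) auto
  thus ?thesis by simp
qed

lemma gs_unique:
  assumes "gs n B" "b \<in> B" "c \<in> B" "b mod int n = c mod int n"
  shows "b = c"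
proof -
  have "\<forall>x. \<exists>!b. b \<in> B \<and> b mod int n = x mod int n" using assms(1) unfolding gs_def by assumption
  hence "\<exists>!d. d \<in> B \<and> d mod int n = b mod int n" by (rule spec)
  then obtain d where d: "\<And>y. y \<in> B \<and> y mod int n = b mod int n \<Longrightarrow> y = d" by (elim ex1E) blast
  have "b = d" using d assms(2) by simp
  moreover have "c = d" using d assms(3,4) by simp
  ultimately show ?thesis by simp
qed

lemma gs_ex:
  assumes "gs n B" shows "\<exists>b\<in>B. b mod int n = x mod int n"
proof -
  have "\<forall>x. \<exists>!b. b \<in> B \<and> b mod int n = x mod int n" using assms(1) unfolding gs_def by assumption
  hence "\<exists>!d. d \<in> B \<and> d mod int n = x mod int n" by (rule spec)
  hence "\<exists>d. d \<in> B \<and> d mod int n = x mod int n" by (rule ex1_implies_ex)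
  thus ?thesis by blast
qed


lemma gen_ngens:
  assumes n: "n > 0" and g: "gs n B"
  shows "ngens n (gen n B) = B"
proof
  show "ngens n (gen n B) \<subseteq> B"
  proof
    fix a assume "a \<in> ngens n (gen n B)"
    hence a: "a \<in> gen n B" "a - int n \<notin> gen n B" by (auto simp: ngens_def)
    then obtain b where b: "b \<in> B" "b mod int n = a mod int n" "b \<le> a" by (auto simp: gen_def)
    show "a \<in> B"
    proof (cases "b = a")
      case True thus ?thesis using b by simp
    next
      case False
      hence "b + int n \<le> a" using modstep[of "int n" b a] b n by simp
      moreover have "b mod int n = (a - int n) mod int n" using b(2) by simp
      ultimately have "a - int n \<in> gen n B" using b unfolding gen_def by force
      thus ?thesis using a by simp
    qed
  qed
next
  show "B \<subseteq> ngens n (gen n B)"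
  proof
    fix a assume a: "a \<in> B"
    have "a \<in> gen n B" using a by (auto simp: gen_def)
    moreover have "a - int n \<notin> gen n B"
    proof
      assume "a - int n \<in> gen n B"
      then obtain b where b: "b \<in> B" "b mod int n = (a - int n) mod int n" "b \<le> a - int n"
        by (auto simp: gen_def)
      have "b mod int n = a mod int n" using b(2) by simp
      hence "b = a" using gs_unique[OF g b(1) a] by simp
      thus False using b(3) n by simp
    qed
    ultimately show "a \<in> ngens n (gen n B)" by (simp add: ngens_def)
  qed
qed


lemma gen_card:
  assumes n: "n > 0" and g: "gs n B"
  shows "card ({t..<t + int n} - gen n B) = card {c\<in>B. t + int n \<le> c}"
proof -
  define f where "f c = t + (c - t) mod int n" for c
  have inj: "inj_on f {c\<in>B. t + int n \<le> c}"
  proof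
    fix c1 c2 assume c: "c1 \<in> {c\<in>B. t + int n \<le> c}" "c2 \<in> {c\<in>B. t + int n \<le> c}" "f c1 = f c2"
    hence "(c1 - t) mod int n = (c2 - t) mod int n" by (simp add: f_def)
    hence "(c1 - t + t) mod int n = (c2 - t + t) mod int n" by (rule mod_add_cong) simp
    hence "c1 mod int n = c2 mod int n" by simp
    thus "c1 = c2" using gs_unique[OF g] c by auto
  qed
  have img: "f ` {c\<in>B. t + int n \<le> c} = {t..<t + int n} - gen n B"
  proof
    show "f ` {c\<in>B. t + int n \<le> c} \<subseteq> {t..<t + int n} - gen n B"
    proof
      fix y assume "y \<in> f ` {c\<in>B. t + int n \<le> c}"
      then obtain c where c: "c \<in> B" "t + int n \<le> c" "y = f c" by auto
      have yr: "t \<le> y" "y < t + int n" using c(3) n by (auto simp: f_def)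
      have ym: "y mod int n = c mod int n" using c(3) unfolding f_def
        by (simp add: mod_add_right_eq)
      have "y \<notin> gen n B"
      proof
        assume "y \<in> gen n B"
        then obtain b where b: "b \<in> B" "b mod int n = y mod int n" "b \<le> y" by (auto simp: gen_def)
        hence "b = c" using gs_unique[OF g b(1) c(1)] ym by simp
        thus False using b(3) yr c(2) by simp
      qed
      thus "y \<in> {t..<t + int n} - gen n B" using yr by simp
    qed
  next
    show "{t..<t + int n} - gen n B \<subseteq> f ` {c\<in>B. t + int n \<le> c}"
    proof
      fix x assume x: "x \<in> {t..<t + int n} - gen n B"
      obtain c where c: "c \<in> B" "c mod int n = x mod int n" using gs_ex[OF g] by blast
      have "\<not> c \<le> x" using x c unfolding gen_def by auto
      hence "x + int n \<le> c" using modstep[of "int n" x c] c n by simp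
      hence cge: "t + int n \<le> c" using x by auto
      have "(c - t) mod int n = (x - t) mod int n" using c(2) by (rule mod_diff_cong) simp
      also have "\<dots> = x - t" using x by (intro mod_pos_pos_trivial) auto
      finally have "f c = x" by (simp add: f_def)
      thus "x \<in> f ` {c\<in>B. t + int n \<le> c}" using c cge by force
    qed
  qed
  show ?thesis using card_image[OF inj] img by simp
qed

lemma gen_gfun:
  assumes n: "n > 0" and g: "gs n B" and b: "b \<in> B"
  shows "gfun (n+1) (gen n B) b = card {c\<in>B. b + int n \<le> c}"
proof -
  have "b + int n \<in> gen n B" using b by (auto simp: gen_def)
  hence "{b..<b + int (n+1)} - gen n B = {b..<b + int n} - gen n B"
  proof (intro set_eqI iffI)
    fix x assume h: "b + int n \<in> gen n B" "x \<in> {b..<b + int (n+1)} - gen n B"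
    hence "x \<noteq> b + int n" by auto
    thus "x \<in> {b..<b + int n} - gen n B" using h by auto
  qed auto
  thus ?thesis using gen_card[OF n g, of b] by (simp add: gfun_def)
qed



locale sm =
  fixes n m :: nat and D :: "int set"
  assumes npos: "n > 0" and mdef: "m = n + 1"
    and semi: "semimodule m n D" and zn: "zero_normalized D"
begin

lemma nonneg: "x \<in> D \<Longrightarrow> 0 \<le> x"
  using semi by (auto simp: semimodule_def)

lemma addG: "x \<in> D \<Longrightarrow> g \<in> Gamma m n \<Longrightarrow> x + g \<in> D"
  using semi by (auto simp: semimodule_def)

lemma zero_in: "0 \<in> D" using zn by (simp add: zero_normalized_def)

lemma n_in_G: "int n \<in> Gamma m n"
  unfolding gamma_int by (intro exI[of _ 0] exI[of _ 1]) simp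

lemma closure: "x \<in> D \<Longrightarrow> x + int k * int n \<in> D"
proof (induction k)
  case 0 thus ?case by simp
next
  case (Suc k)
  hence "x + int k * int n + int n \<in> D" using addG n_in_G by blast
  thus ?case by (simp add: algebra_simps)
qed

lemma descent:
  assumes x: "x \<in> D"
  shows "\<exists>k::nat. x - int k * int n \<in> D \<and> x - int k * int n - int n \<notin> D"
proof -
  define S where "S = {k::nat. x - int k * int n \<in> D}"
  have fin: "finite S"
  proof (rule finite_subset)
    show "S \<subseteq> {..nat x}"
    proof
      fix k assume "k \<in> S"
      hence "x - int k * int n \<in> D" by (simp add: S_def)
      hence "0 \<le> x - int k * int n" by (rule nonneg)
      moreover have "int k * 1 \<le> int k * int n" using npos by (intro mult_left_mono) auto
      ultimately show "k \<in> {..nat x}" by simp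
    qed
  qed simp
  have "0 \<in> S" using x by (simp add: S_def)
  define K where "K = Max S"
  have K: "K \<in> S" using fin \<open>0 \<in> S\<close> unfolding K_def by (intro Max_in) auto
  have "Suc K \<notin> S"
  proof
    assume "Suc K \<in> S"
    hence "Suc K \<le> K" using fin unfolding K_def by (intro Max_ge) auto
    thus False by simp
  qed
  hence "x - int K * int n - int n \<notin> D" by (simp add: S_def algebra_simps)
  thus ?thesis using K by (auto simp: S_def)
qed

definition B where "B = ngens n D"

lemma gsB: "gs n B"
  unfolding gs_def
proof
  fix x
  define r where "r = x mod int n"
  have r: "0 \<le> r" "r < int n" using npos by (auto simp: r_def)
  have "r + int n * int n \<in> Gamma m n"
    unfolding gamma_int using r mdef by (intro exI[of _ r] exI[of _ "int n - r"]) (auto simp: algebra_simps)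
  hence y: "r + int n * int n \<in> D" using addG[OF zero_in] by simp
  obtain k :: nat where k: "r + int n * int n - int k * int n \<in> D"
    "r + int n * int n - int k * int n - int n \<notin> D" using descent[OF y] by blast
  define b where "b = r + int n * int n - int k * int n"
  have bB: "b \<in> B" using k unfolding B_def ngens_def b_def by simp
  have bm: "b mod int n = x mod int n"
  proof -
    have "b = r + (int n - int k) * int n" by (simp add: b_def algebra_simps)
    hence "b mod int n = r mod int n" by simp
    thus ?thesis using r by (simp add: r_def)
  qed
  show "\<exists>!b. b \<in> B \<and> b mod int n = x mod int n"
  proof (rule ex1I[of _ b])
    show "b \<in> B \<and> b mod int n = x mod int n" using bB bm by simp
  next
    have uniq: "c1 \<in> B \<Longrightarrow> c2 \<in> B \<Longrightarrow> c1 mod int n = c2 mod int n \<Longrightarrow> \<not> c1 < c2" for c1 c2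
    proof
      assume c: "c1 \<in> B" "c2 \<in> B" "c1 mod int n = c2 mod int n" "c1 < c2"
      have "c2 mod int n = c1 mod int n" using c by simp
      hence "int n dvd c2 - c1" by (simp only: mod_eq_dvd_iff)
      then obtain j where j: "c2 - c1 = int n * j" by (elim dvdE)
      have "0 < int n * j" using c(4) j by simp
      hence "0 < j" using npos by (simp add: zero_less_mult_iff)
      have jj: "int (nat (j - 1)) = j - 1" using \<open>0 < j\<close> by simp
      have eq: "c2 - int n = c1 + int (nat (j - 1)) * int n"
        unfolding jj using j by (simp add: algebra_simps)
      have "c1 \<in> D" using c(1) by (simp add: B_def ngens_def)
      hence "c2 - int n \<in> D" unfolding eq by (rule closure)
      thus False using c(2) by (simp add: B_def ngens_def)
    qed
    fix c assume c: "c \<in> B \<and> c mod int n = x mod int n"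
    show "c = b" using uniq[of c b] uniq[of b c] c bB bm by force
  qed
qed

lemma D_gen: "D = gen n B"
proof
  show "D \<subseteq> gen n B"
  proof
    fix x assume x: "x \<in> D"
    obtain k :: nat where k: "x - int k * int n \<in> D" "x - int k * int n - int n \<notin> D"
      using descent[OF x] by blast
    have "x - int k * int n \<in> B" using k by (simp add: B_def ngens_def)
    moreover have "(x - int k * int n) mod int n = x mod int n"
    proof -
      have "(x - int k * int n + int k * int n) mod int n = (x - int k * int n) mod int n"
        by (rule mod_mult_self1)
      thus ?thesis by simp
    qed
    moreover have "x - int k * int n \<le> x" using npos by simp
    ultimately show "x \<in> gen n B" unfolding gen_def by blast
  qed
next
  show "gen n B \<subseteq> D"
  proof
    fix x assume "x \<in> gen n B"
    then obtain b where b: "b \<in> B" "b mod int n = x mod int n" "b \<le> x" by (auto simp: gen_def)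
    have "x mod int n = b mod int n" using b by simp
    hence "int n dvd x - b" by (simp only: mod_eq_dvd_iff)
    then obtain j where j: "x - b = int n * j" by (elim dvdE)
    have "0 \<le> int n * j" using b(3) j by simp
    hence "0 \<le> j" using npos by (simp add: zero_le_mult_iff)
    hence eq: "x = b + int (nat j) * int n" using j by (simp add: algebra_simps)
    have "b \<in> D" using b(1) by (simp add: B_def ngens_def)
    thus "x \<in> D" by (subst eq) (rule closure)
  qed
qed

definition F where "F = int n * int n - int n - 1"

lemma dual_iff: "phi \<in> dual m n D \<longleftrightarrow> F - phi \<notin> D"
proof
  assume h: "phi \<in> dual m n D"
  show "F - phi \<notin> D"
  proof
    assume "F - phi \<in> D"
    hence "phi + (F - phi) \<in> Gamma m n" using h by (auto simp: dual_def)
    hence "F \<in> Gamma m n" by simp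
    thus False using gamma_F[OF npos mdef] unfolding F_def by blast
  qed
next
  assume h: "F - phi \<notin> D"
  show "phi \<in> dual m n D" unfolding dual_def
  proof (intro CollectI ballI)
    fix d assume d: "d \<in> D"
    show "phi + d \<in> Gamma m n"
    proof (rule ccontr)
      assume "phi + d \<notin> Gamma m n"
      hence "F - (phi + d) \<in> Gamma m n" using gamma_sym[OF npos mdef] by (simp add: F_def)
      hence "d + (F - (phi + d)) \<in> D" using addG[OF d] by blast
      thus False using h by simp
    qed
  qed
qed

lemma gap_le_F: "x \<notin> D \<Longrightarrow> x \<le> F"
proof -
  assume x: "x \<notin> D"
  have "x \<notin> Gamma m n" using x addG[OF zero_in] by force
  hence "F - x \<in> Gamma m n" using gamma_sym[OF npos mdef] by (simp add: F_def)
  thus "x \<le> F" using gamma_nonneg by force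
qed

definition M where "M = Max ({-1..F} - D)"

lemma M_props: "M \<notin> D" "\<And>x. x \<notin> D \<Longrightarrow> x \<le> M"
proof -
  have m1: "-1 \<in> {-1..F} - D" using nonneg gap_le_F[of "-1"] by force
  have fin: "finite ({-1..F} - D)" by simp
  show "M \<notin> D" using Max_in[OF fin] m1 unfolding M_def by blast
  fix x assume x: "x \<notin> D"
  show "x \<le> M"
  proof (cases "x < -1")
    case True
    have "-1 \<le> M" unfolding M_def using Max_ge[OF fin m1] .
    thus ?thesis using True by simp
  next
    case False
    hence "x \<in> {-1..F} - D" using x gap_le_F[OF x] by simp
    thus ?thesis unfolding M_def using Max_ge[OF fin] by blast
  qed
qed

lemma hat_eq: "hat m n D = {y. M - y \<notin> D}"
proof -
  have L: "(LEAST phi. phi \<in> dual m n D) = F - M"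
  proof (rule Least_equality)
    show "F - M \<in> dual m n D" using M_props(1) by (simp add: dual_iff)
  next
    fix y assume "y \<in> dual m n D"
    hence "F - y \<notin> D" by (simp add: dual_iff)
    hence "F - y \<le> M" by (rule M_props(2))
    thus "F - M \<le> y" by simp
  qed
  show ?thesis
  proof (intro set_eqI iffI)
    fix y assume "y \<in> hat m n D"
    then obtain phi where "phi \<in> dual m n D" "y = phi - (F - M)" unfolding hat_def L by blast
    thus "y \<in> {y. M - y \<notin> D}" by (simp add: dual_iff)
  next
    fix y assume "y \<in> {y. M - y \<notin> D}"
    hence "y + (F - M) \<in> dual m n D" by (simp add: dual_iff)
    moreover have "y = (y + (F - M)) - (F - M)" by simp
    ultimately show "y \<in> hat m n D" unfolding hat_def L by blast
  qed
qed

definition B' where "B' = (\<lambda>b. M + int n - b) ` B"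

lemma gsB': "gs n B'"
  unfolding gs_def
proof
  fix x
  obtain b where b: "b \<in> B" "b mod int n = (M + int n - x) mod int n" using gs_ex[OF gsB] by blast
  have bm: "(M + int n - b) mod int n = x mod int n"
  proof -
    have "(M + int n - b) mod int n = (M + int n - (M + int n - x)) mod int n"
      using b(2) by (intro mod_diff_cong) auto
    thus ?thesis by simp
  qed
  show "\<exists>!c. c \<in> B' \<and> c mod int n = x mod int n"
  proof (rule ex1I[of _ "M + int n - b"])
    show "M + int n - b \<in> B' \<and> (M + int n - b) mod int n = x mod int n"
      using b bm by (simp add: B'_def)
  next
    fix c assume c: "c \<in> B' \<and> c mod int n = x mod int n"
    then obtain b2 where b2: "b2 \<in> B" "c = M + int n - b2" by (auto simp: B'_def)
    have e: "(M + int n - b2) mod int n = (M + int n - b) mod int n" using c b2 bm by simp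
    have "(M + int n - (M + int n - b2)) mod int n = (M + int n - (M + int n - b)) mod int n"
      by (rule mod_diff_cong[OF refl e])
    hence "b2 mod int n = b mod int n" by simp
    hence "b2 = b" using gs_unique[OF gsB b2(1) b(1)] by simp
    thus "c = M + int n - b" using b2 by simp
  qed
qed

lemma hat_gen: "hat m n D = gen n B'"
proof (intro set_eqI)
  fix y
  obtain b where b: "b \<in> B" "b mod int n = (M - y) mod int n" using gs_ex[OF gsB] by blast
  have "y \<in> hat m n D \<longleftrightarrow> \<not> b \<le> M - y"
  proof -
    have "M - y \<in> D \<longleftrightarrow> b \<le> M - y"
    proof
      assume "M - y \<in> D"
      then obtain c where c: "c \<in> B" "c mod int n = (M - y) mod int n" "c \<le> M - y"
        using D_gen by (auto simp: gen_def)
      have "c = b" using gs_unique[OF gsB c(1) b(1)] c(2) b(2) by simp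
      thus "b \<le> M - y" using c by simp
    next
      assume "b \<le> M - y" thus "M - y \<in> D" using b D_gen by (auto simp: gen_def)
    qed
    thus ?thesis using hat_eq by simp
  qed
  also have "\<dots> \<longleftrightarrow> M + int n - b \<le> y"
  proof
    assume "\<not> b \<le> M - y"
    hence "M - y + int n \<le> b" using modstep[of "int n" "M - y" b] b(2) npos by simp
    thus "M + int n - b \<le> y" by simp
  qed (use npos in simp)
  also have "\<dots> \<longleftrightarrow> y \<in> gen n B'"
  proof
    assume h: "M + int n - b \<le> y"
    have "(M + int n - b) mod int n = (M + int n - (M - y)) mod int n"
      using b(2) by (intro mod_diff_cong) auto
    hence "(M + int n - b) mod int n = y mod int n" by simp
    thus "y \<in> gen n B'" using h b(1) unfolding gen_def B'_def by blast
  next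
    assume "y \<in> gen n B'"
    then obtain b2 where b2: "b2 \<in> B" "(M + int n - b2) mod int n = y mod int n" "M + int n - b2 \<le> y"
      unfolding gen_def B'_def by blast
    have "(M + int n - (M + int n - b2)) mod int n = (M + int n - y) mod int n"
      using b2 by (intro mod_diff_cong) auto
    hence "b2 mod int n = (M - y + int n) mod int n" by (simp add: algebra_simps)
    hence "b2 mod int n = (M - y) mod int n" by simp
    hence "b2 = b" using gs_unique[OF gsB b2(1) b(1)] b(2) by simp
    thus "M + int n - b \<le> y" using b2 by simp
  qed
  finally show "y \<in> hat m n D \<longleftrightarrow> y \<in> gen n B'" .
qed

end


lemma gs_fin:
  assumes n: "n > 0" and g: "gs n B"
  shows "finite B \<and> card B = n"
proof -
  have bij: "bij_betw (\<lambda>b. b mod int n) B {0..<int n}"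
    unfolding bij_betw_def
  proof
    show "inj_on (\<lambda>b. b mod int n) B" using gs_unique[OF g] by (auto intro: inj_onI)
    show "(\<lambda>b. b mod int n) ` B = {0..<int n}"
    proof
      show "(\<lambda>b. b mod int n) ` B \<subseteq> {0..<int n}" using n by auto
      show "{0..<int n} \<subseteq> (\<lambda>b. b mod int n) ` B"
      proof
        fix r assume r: "r \<in> {0..<int n}"
        obtain b where "b \<in> B" "b mod int n = r mod int n" using gs_ex[OF g] by blast
        moreover have "r mod int n = r" using r by simp
        ultimately show "r \<in> (\<lambda>b. b mod int n) ` B" by force
      qed
    qed
  qed
  have "finite B" using bij_betw_finite[OF bij] by simp
  moreover have "card B = n" using bij_betw_same_card[OF bij] by simp
  ultimately show ?thesis by simp
qed

theorem mainTheorem8: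
  fixes n m :: nat and D :: "int set"
  assumes "n > 0" and "m = n + 1"
    and "semimodule m n D" and "zero_normalized D"
  shows "young_cells (Gn m n (hat m n D)) = transpose_cells (young_cells (Gn m n D))"
proof -
  interpret sm n m D using assms by unfold_locales
  have n: "n > 0" by (rule assms(1))
  obtain fB cB where fB: "finite B" and cB: "card B = n" using gs_fin[OF n gsB] by blast
  define s where "s = sorted_list_of_set B"
  have ss: "sorted_wrt (<) s" unfolding s_def by simp
  have sset: "set s = B" unfolding s_def using fB by simp
  have slen: "length s = n" unfolding s_def using cB by simp
  define f where "f b = M + int n - b" for b
  have B'f: "B' = f ` B" by (simp add: B'_def f_def)
  have injf: "inj_on f X" for X by (auto simp: f_def intro: inj_onI)
  define s' where "s' = map f (rev s)"
  have ss': "sorted_wrt (<) s'"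
  proof -
    have "sorted_wrt (\<lambda>x y. f y < f x) s" by (rule sorted_wrt_mono_rel[OF _ ss]) (simp add: f_def)
    hence "sorted_wrt (\<lambda>x y. f x < f y) (rev s)" by (simp add: sorted_wrt_rev)
    thus ?thesis by (simp add: s'_def sorted_wrt_map)
  qed
  have s'set: "set s' = B'" by (simp add: s'_def B'f sset)
  have fB': "finite B'" using fB B'f by simp
  have s'eq: "sorted_list_of_set B' = s'"
    using strict_sorted_equal[OF ss' sorted_list_of_set.strict_sorted_key_list_of_set[of B']] fB' s'set
    by simp
  have gD: "Gn m n D = map (\<lambda>b. card {c\<in>B. b + int n \<le> c}) s"
  proof -
    have "Gn m n D = map (gfun (n+1) (gen n B)) s"
      unfolding Gn_def s_def using D_gen gen_ngens[OF n gsB] assms(2) by simp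
    also have "\<dots> = map (\<lambda>b. card {c\<in>B. b + int n \<le> c}) s"
      using gen_gfun[OF n gsB] sset by (intro map_cong) auto
    finally show ?thesis .
  qed
  have gH: "Gn m n (hat m n D) = map (\<lambda>b. card {c\<in>B'. b + int n \<le> c}) s'"
  proof -
    have "Gn m n (hat m n D) = map (gfun (n+1) (gen n B')) s'"
      unfolding Gn_def using hat_gen gen_ngens[OF n gsB'] assms(2) s'eq by simp
    also have "\<dots> = map (\<lambda>b. card {c\<in>B'. b + int n \<le> c}) s'"
      using gen_gfun[OF n gsB'] s'set by (intro map_cong) auto
    finally show ?thesis .
  qed
  have s'nth: "s' ! a = M + int n - s ! (n - 1 - a)" if "a < n" for a
    using that slen by (simp add: s'_def rev_nth f_def)
  have cnt: "card {c\<in>B'. s' ! a + int n \<le> c} = card {x\<in>set s. x \<le> s ! (n - 1 - a) - int n}"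
    if a: "a < n" for a
  proof -
    have "{c\<in>B'. s' ! a + int n \<le> c} = f ` {x\<in>set s. x \<le> s ! (n - 1 - a) - int n}"
      unfolding B'f sset s'nth[OF a] by (auto simp: f_def)
    thus ?thesis using card_image[OF injf] by simp
  qed
  show ?thesis
  proof (intro set_eqI)
    fix p :: "nat \<times> nat"
    obtain a b where p: "p = (a, b)" by (cases p)
    have L: "p \<in> young_cells (Gn m n (hat m n D)) \<longleftrightarrow> a < n \<and> b < n \<and> s ! b + int n \<le> s ! (n - 1 - a)"
    proof -
      have "p \<in> young_cells (Gn m n (hat m n D)) \<longleftrightarrow> a < n \<and> b < card {c\<in>B'. s' ! a + int n \<le> c}"
        unfolding p young_cells_def gH using slen by (auto simp: s'_def)
      also have "\<dots> \<longleftrightarrow> a < n \<and> b < card {x\<in>set s. x \<le> s ! (n - 1 - a) - int n}"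
        using cnt by auto
      also have "\<dots> \<longleftrightarrow> a < n \<and> b < n \<and> s ! b + int n \<le> s ! (n - 1 - a)"
        using count_le[OF ss] slen by auto
      finally show ?thesis .
    qed
    have R: "p \<in> transpose_cells (young_cells (Gn m n D)) \<longleftrightarrow> b < n \<and> a < n \<and> s ! b + int n \<le> s ! (n - 1 - a)"
    proof -
      have "p \<in> transpose_cells (young_cells (Gn m n D)) \<longleftrightarrow> b < n \<and> a < card {c\<in>set s. s ! b + int n \<le> c}"
        unfolding p transpose_cells_def young_cells_def gD using slen sset by auto
      also have "\<dots> \<longleftrightarrow> b < n \<and> a < n \<and> s ! b + int n \<le> s ! (n - 1 - a)"
        using count_ge[OF ss] slen by auto
      finally show ?thesis .
    qed
    show "p \<in> young_cells (Gn m n (hat m n D)) \<longleftrightarrow> p \<in> transpose_cells (young_cells (Gn m n D))"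
      using L R by auto
  qed
qed


end
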